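(* If $\kappa$ is a singular strong limit cardinal, then there is no logic $\mathscr L$ such that $\mathbb L^{-1}_\kappa\le\mathscr L\le\mathbb L^0_\kappa$ and $\mathscr L$ satisfies full substitution.
   Context: A logic $\mathscr L$ assigns to each vocabulary $\tau$ a set $\mathscr L(\tau)$ of sentences and a satisfaction relation, invariant under isomorphism and renaming, with $\mathscr L(\tau_1)\subseteq\mathscr L(\tau_2)$ for $\tau_1\subseteq\tau_2$ and satisfaction depending only on the reduct; a formula $\varphi(\bar x)$ is a sentence in the vocabulary expanded by new constants. $\mathscr L_1\le\mathscr L_2$ means every sentence of $\mathscr L_1(\tau)$ is equivalent (same models) to one of $\mathscr L_2(\tau)$, for every $\tau$. $\mathbb L_{\lambda,\mu}$ is the infinitary logic with conjunctions of fewer than $\lambda$ formulas and quantification over fewer than $\mu$ variables; $\mathbb L^{-1}_\kappa=\bigcup_{\lambda<\kappa}\mathbb L_{\lambda^+,\aleph_0}$ and $\mathbb L^0_\kappa=\bigcup_{\lambda<\kappa}\mathbb L_{\lambda^+,\lambda^+}$. Full substitution: for vocabularies $\tau_1,\tau_2$ and an assignment to each atomic $\tau_2$-formula $\varphi(\bar x)$ (of the forms $P(\bar x)$, $x_0=x_1$, $x_0=F(x_1,\dots,x_n)$) of a formula $\vartheta_\varphi(\bar x)\in\mathscr L(\tau_1)$ with $\vartheta_{x_0=x_1}$ being $x_0=x_1$, and a $\tau_1$-model $M$, let $M[\bar\vartheta]$ be the $\tau_2$-structure with the universe of $M$ interpreting $P$ by $\{\bar a:M\models\vartheta_{P(\bar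 x)}[\bar a]\}$ and $F$ by the function whose graph is defined by $\vartheta_{x_0=F(\bar x)}$ (when this is a function). $\mathscr L$ has full substitution if for every such assignment and every $\psi_2\in\mathscr L(\tau_2)$ there is $\psi_1\in\mathscr L(\tau_1)$ with $M\models\psi_1\iff M[\bar\vartheta]\models\psi_2$ for every $\tau_1$-model $M$ for which $M[\bar\vartheta]$ is defined. *)

theory Defs
  imports Main
begin

definition card_le :: "'a set \<Rightarrow> 'b set \<Rightarrow> bool" where
  "card_le A B \<longleftrightarrow> (card_of A, card_of B) \<in> ordLeq"

definition card_lt :: "'a set \<Rightarrow> 'b set \<Rightarrow> bool" where
  "card_lt A B \<longleftrightarrow> (card_of A, card_of B) \<in> ordLess"

text \<open>The cardinal kappa is represented as the cardinality of a set K.\<close>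

definition singular_card :: "'a set \<Rightarrow> bool" where
  "singular_card K \<longleftrightarrow> infinite K \<and> \<not> regularCard (card_of K)"

definition strong_limit_card :: "'a set \<Rightarrow> bool" where
  "strong_limit_card K \<longleftrightarrow> infinite K \<and> (\<forall>A::'a set. card_lt A K \<longrightarrow> card_lt (Pow A) K)"

text \<open>A symbol is a relation symbol or a function symbol with a name and a
  (finite) arity; constants are 0-ary function symbols. A vocabulary is a set
  of symbols.\<close>

datatype 'n sym = Rel 'n nat | Fun 'n nat

type_synonym 'n vocab = "'n sym set"

record ('n, 'u) struc =
  dom :: "'u set"
  rel :: "'n \<Rightarrow> nat \<Rightarrow> 'u list set"
  fn  :: "'n \<Rightarrow> nat \<Rightarrow> 'u list \<Rightarrow> 'u"

definition tuples :: "'u set \<Rightarrow> nat \<Rightarrow> 'u list set" where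
  "tuples D n = {xs. length xs = n \<and> set xs \<subseteq> D}"

text \<open>tau-structures, in canonical form: symbols outside tau get trivial
  interpretations, so that a tau-structure is determined by its universe and
  its interpretation of the symbols of tau.\<close>

definition is_struc :: "'n vocab \<Rightarrow> ('n, 'u) struc \<Rightarrow> bool" where
  "is_struc \<tau> M \<longleftrightarrow> dom M \<noteq> {}
     \<and> (\<forall>s n. rel M s n \<subseteq> tuples (dom M) n \<and> (Rel s n \<notin> \<tau> \<longrightarrow> rel M s n = {}))
     \<and> (\<forall>s n xs. (Fun s n \<in> \<tau> \<and> xs \<in> tuples (dom M) n \<longrightarrow> fn M s n xs \<in> dom M)
               \<and> (\<not> (Fun s n \<in> \<tau> \<and> xs \<in> tuples (dom M) n) \<longrightarrow> fn M s n xs = undefined))"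

definition reduct :: "'n vocab \<Rightarrow> ('n, 'u) struc \<Rightarrow> ('n, 'u) struc" where
  "reduct \<tau> M = \<lparr>dom = dom M,
     rel = (\<lambda>s n. if Rel s n \<in> \<tau> then rel M s n else {}),
     fn = (\<lambda>s n xs. if Fun s n \<in> \<tau> \<and> xs \<in> tuples (dom M) n then fn M s n xs else undefined)\<rparr>"

definition struc_iso :: "'n vocab \<Rightarrow> ('u \<Rightarrow> 'v) \<Rightarrow> ('n, 'u) struc \<Rightarrow> ('n, 'v) struc \<Rightarrow> bool" where
  "struc_iso \<tau> h M N \<longleftrightarrow> bij_betw h (dom M) (dom N)
     \<and> (\<forall>s n xs. Rel s n \<in> \<tau> \<and> xs \<in> tuples (dom M) n \<longrightarrow> (xs \<in> rel M s n \<longleftrightarrow> map h xs \<in> rel N s n))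
     \<and> (\<forall>s n xs. Fun s n \<in> \<tau> \<and> xs \<in> tuples (dom M) n \<longrightarrow> h (fn M s n xs) = fn N s n (map h xs))"

definition is_renaming :: "('n sym \<Rightarrow> 'n sym) \<Rightarrow> 'n vocab \<Rightarrow> 'n vocab \<Rightarrow> bool" where
  "is_renaming g \<tau> \<tau>' \<longleftrightarrow> bij_betw g \<tau> \<tau>'
     \<and> (\<forall>s n. Rel s n \<in> \<tau> \<longrightarrow> (\<exists>s'. g (Rel s n) = Rel s' n))
     \<and> (\<forall>s n. Fun s n \<in> \<tau> \<longrightarrow> (\<exists>s'. g (Fun s n) = Fun s' n))"

definition renamed :: "('n sym \<Rightarrow> 'n sym) \<Rightarrow> 'n vocab \<Rightarrow> ('n, 'u) struc \<Rightarrow> ('n, 'u) struc \<Rightarrow> bool" where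
  "renamed g \<tau> M M' \<longleftrightarrow> dom M' = dom M
     \<and> (\<forall>s n s'. Rel s n \<in> \<tau> \<and> g (Rel s n) = Rel s' n \<longrightarrow> rel M' s' n = rel M s n)
     \<and> (\<forall>s n s'. Fun s n \<in> \<tau> \<and> g (Fun s n) = Fun s' n \<longrightarrow> fn M' s' n = fn M s n)"

section \<open>Abstract logics\<close>

definition is_logic :: "('n vocab \<Rightarrow> 'x set) \<Rightarrow> (('n, 'u) struc \<Rightarrow> 'x \<Rightarrow> bool) \<Rightarrow> bool" where
  "is_logic Sent sat \<longleftrightarrow>
     (\<forall>\<tau>1 \<tau>2. \<tau>1 \<subseteq> \<tau>2 \<longrightarrow> Sent \<tau>1 \<subseteq> Sent \<tau>2)
   \<and> (\<forall>\<tau> \<phi> M N h. \<phi> \<in> Sent \<tau> \<and> is_struc \<tau> M \<and> is_struc \<tau> N \<and> struc_iso \<tau> h M N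
        \<longrightarrow> (sat M \<phi> \<longleftrightarrow> sat N \<phi>))
   \<and> (\<forall>\<tau> \<tau>' \<phi> M. \<phi> \<in> Sent \<tau> \<and> \<tau> \<subseteq> \<tau>' \<and> is_struc \<tau>' M
        \<longrightarrow> (sat M \<phi> \<longleftrightarrow> sat (reduct \<tau> M) \<phi>))
   \<and> (\<forall>\<tau> \<tau>' g. is_renaming g \<tau> \<tau>' \<longrightarrow>
        (\<forall>\<phi>\<in>Sent \<tau>. \<exists>\<phi>'\<in>Sent \<tau>'. \<forall>M M'. is_struc \<tau> M \<and> is_struc \<tau>' M' \<and> renamed g \<tau> M M'
            \<longrightarrow> (sat M \<phi> \<longleftrightarrow> sat M' \<phi>')))"

section \<open>Full substitution\<close>

text \<open>A formula phi(x1,...,xk) of a logic is a sentence in the vocabulary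
  expanded by k new (pairwise distinct) constants cs; M satisfies it at as iff
  the expansion of M interpreting cs by as satisfies the sentence.\<close>

definition expand_consts :: "('n, 'u) struc \<Rightarrow> 'n list \<Rightarrow> 'u list \<Rightarrow> ('n, 'u) struc" where
  "expand_consts M cs as = M\<lparr>fn := (\<lambda>s n xs.
      if n = 0 \<and> xs = [] \<and> s \<in> set cs then the (map_of (zip cs as) s) else fn M s n xs)\<rparr>"

definition const_vocab :: "'n list \<Rightarrow> 'n vocab" where
  "const_vocab cs = {Fun c 0 | c. c \<in> set cs}"

text \<open>An assignment of formulas: to each symbol of tau2 a list of new
  constants (the variables of the atomic formula: x1..xn for P(x1..xn), and
  x0,x1..xn for x0 = F(x1..xn)) and a sentence of the tau1-vocabulary expanded by
  these constants. The formula assigned to x0 = x1 is x0 = x1 itself.\<close>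

definition subst_assignment ::
  "('n vocab \<Rightarrow> 'x set) \<Rightarrow> 'n vocab \<Rightarrow> 'n vocab \<Rightarrow> ('n sym \<Rightarrow> 'n list \<times> 'x) \<Rightarrow> bool" where
  "subst_assignment Sent \<tau>1 \<tau>2 \<theta> \<longleftrightarrow>
     (\<forall>\<sigma>\<in>\<tau>2. distinct (fst (\<theta> \<sigma>)) \<and> (\<forall>c\<in>set (fst (\<theta> \<sigma>)). Fun c 0 \<notin> \<tau>1)
        \<and> snd (\<theta> \<sigma>) \<in> Sent (\<tau>1 \<union> const_vocab (fst (\<theta> \<sigma>))))
   \<and> (\<forall>s n. Rel s n \<in> \<tau>2 \<longrightarrow> length (fst (\<theta> (Rel s n))) = n)
   \<and> (\<forall>s n. Fun s n \<in> \<tau>2 \<longrightarrow> length (fst (\<theta> (Fun s n))) = Suc n)"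

definition holds_at :: "(('n, 'u) struc \<Rightarrow> 'x \<Rightarrow> bool) \<Rightarrow> ('n, 'u) struc \<Rightarrow> 'n list \<times> 'x \<Rightarrow> 'u list \<Rightarrow> bool" where
  "holds_at sat M \<theta>\<sigma> as \<longleftrightarrow> sat (expand_consts M (fst \<theta>\<sigma>) as) (snd \<theta>\<sigma>)"

definition subst_defined ::
  "(('n, 'u) struc \<Rightarrow> 'x \<Rightarrow> bool) \<Rightarrow> 'n vocab \<Rightarrow> ('n sym \<Rightarrow> 'n list \<times> 'x) \<Rightarrow> ('n, 'u) struc \<Rightarrow> bool" where
  "subst_defined sat \<tau>2 \<theta> M \<longleftrightarrow>
     (\<forall>s n xs. Fun s n \<in> \<tau>2 \<and> xs \<in> tuples (dom M) n \<longrightarrow>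
        (\<exists>!a. a \<in> dom M \<and> holds_at sat M (\<theta> (Fun s n)) (a # xs)))"

definition subst_struc ::
  "(('n, 'u) struc \<Rightarrow> 'x \<Rightarrow> bool) \<Rightarrow> 'n vocab \<Rightarrow> ('n sym \<Rightarrow> 'n list \<times> 'x) \<Rightarrow> ('n, 'u) struc \<Rightarrow> ('n, 'u) struc" where
  "subst_struc sat \<tau>2 \<theta> M = \<lparr>dom = dom M,
     rel = (\<lambda>s n. if Rel s n \<in> \<tau>2 then {as \<in> tuples (dom M) n. holds_at sat M (\<theta> (Rel s n)) as} else {}),
     fn = (\<lambda>s n xs. if Fun s n \<in> \<tau>2 \<and> xs \<in> tuples (dom M) n
              then (THE a. a \<in> dom M \<and> holds_at sat M (\<theta> (Fun s n)) (a # xs)) else undefined)\<rparr>"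

definition full_substitution :: "('n vocab \<Rightarrow> 'x set) \<Rightarrow> (('n, 'u) struc \<Rightarrow> 'x \<Rightarrow> bool) \<Rightarrow> bool" where
  "full_substitution Sent sat \<longleftrightarrow>
     (\<forall>\<tau>1 \<tau>2 \<theta>. subst_assignment Sent \<tau>1 \<tau>2 \<theta> \<longrightarrow>
        (\<forall>\<psi>2\<in>Sent \<tau>2. \<exists>\<psi>1\<in>Sent \<tau>1. \<forall>M. is_struc \<tau>1 M \<and> subst_defined sat \<tau>2 \<theta> M
            \<longrightarrow> (sat M \<psi>1 \<longleftrightarrow> sat (subst_struc sat \<tau>2 \<theta> M) \<psi>2)))"

section \<open>Infinitary logics L_{lambda,mu}\<close>

text \<open>Formulas with variables, conjunction index sets and quantified variable
  sets drawn from 'u. Atomic formulas are (unnested) P(xs), x = y and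
  x0 = F(xs).\<close>

datatype ('n, 'v) ifm =
    RelA 'n "'v list"
  | EqA 'v 'v
  | FunA 'n 'v "'v list"
  | Neg "('n, 'v) ifm"
  | Conj "'v set" "'v \<Rightarrow> ('n, 'v) ifm"
  | Exi "'v set" "('n, 'v) ifm"

primrec isat :: "('n, 'u) ifm \<Rightarrow> ('n, 'u) struc \<Rightarrow> ('u \<Rightarrow> 'u) \<Rightarrow> bool" where
  "isat (RelA P xs) M s = (map s xs \<in> rel M P (length xs))"
| "isat (EqA x y) M s = (s x = s y)"
| "isat (FunA F x ys) M s = (s x = fn M F (length ys) (map s ys))"
| "isat (Neg \<phi>) M s = (\<not> isat \<phi> M s)"
| "isat (Conj I f) M s = (\<forall>i\<in>I. isat (f i) M s)"
| "isat (Exi V \<phi>) M s = (\<exists>s'. (\<forall>x\<in>V. s' x \<in> dom M) \<and> (\<forall>x. x \<notin> V \<longrightarrow> s' x = s x) \<and> isat \<phi> M s')"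

primrec freev :: "('n, 'v) ifm \<Rightarrow> 'v set" where
  "freev (RelA P xs) = set xs"
| "freev (EqA x y) = {x, y}"
| "freev (FunA F x ys) = insert x (set ys)"
| "freev (Neg \<phi>) = freev \<phi>"
| "freev (Conj I f) = (\<Union>i\<in>I. freev (f i))"
| "freev (Exi V \<phi>) = freev \<phi> - V"

primrec iwf :: "'n vocab \<Rightarrow> ('v set \<Rightarrow> bool) \<Rightarrow> ('v set \<Rightarrow> bool) \<Rightarrow> ('n, 'v) ifm \<Rightarrow> bool" where
  "iwf \<tau> CB QB (RelA P xs) = (Rel P (length xs) \<in> \<tau>)"
| "iwf \<tau> CB QB (EqA x y) = True"
| "iwf \<tau> CB QB (FunA F x ys) = (Fun F (length ys) \<in> \<tau>)"
| "iwf \<tau> CB QB (Neg \<phi>) = iwf \<tau> CB QB \<phi>"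
| "iwf \<tau> CB QB (Conj I f) = (CB I \<and> (\<forall>i\<in>I. iwf \<tau> CB QB (f i)))"
| "iwf \<tau> CB QB (Exi V \<phi>) = (QB V \<and> iwf \<tau> CB QB \<phi>)"

text \<open>Sentences of L_{lambda^+, aleph_0}(tau) and L_{lambda^+, lambda^+}(tau),
  lambda = |A|: conjunctions of at most lambda formulas, quantification over
  finitely many resp. at most lambda variables.\<close>

definition Lfin_sent :: "'u set \<Rightarrow> 'n vocab \<Rightarrow> ('n, 'u) ifm \<Rightarrow> bool" where
  "Lfin_sent A \<tau> \<phi> \<longleftrightarrow> iwf \<tau> (\<lambda>I. card_le I A) finite \<phi> \<and> freev \<phi> = {}"

definition Linf_sent :: "'u set \<Rightarrow> 'n vocab \<Rightarrow> ('n, 'u) ifm \<Rightarrow> bool" where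
  "Linf_sent A \<tau> \<phi> \<longleftrightarrow> iwf \<tau> (\<lambda>I. card_le I A) (\<lambda>V. card_le V A) \<phi> \<and> freev \<phi> = {}"

text \<open>L^{-1}_kappa = union over lambda < kappa of L_{lambda^+,aleph_0};
  L^0_kappa = union over lambda < kappa of L_{lambda^+,lambda^+}.\<close>

definition Lminus1 :: "'u set \<Rightarrow> 'n vocab \<Rightarrow> ('n, 'u) ifm set" where
  "Lminus1 K \<tau> = {\<phi>. \<exists>A::'u set. card_lt A K \<and> Lfin_sent A \<tau> \<phi>}"

definition Lzero :: "'u set \<Rightarrow> 'n vocab \<Rightarrow> ('n, 'u) ifm set" where
  "Lzero K \<tau> = {\<phi>. \<exists>A::'u set. card_lt A K \<and> Linf_sent A \<tau> \<phi>}"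

definition inf_le_logic ::
  "('n vocab \<Rightarrow> ('n, 'u) ifm set) \<Rightarrow> ('n vocab \<Rightarrow> 'x set) \<Rightarrow> (('n, 'u) struc \<Rightarrow> 'x \<Rightarrow> bool) \<Rightarrow> bool" where
  "inf_le_logic L1 Sent sat \<longleftrightarrow> (\<forall>\<tau>. \<forall>\<phi>\<in>L1 \<tau>. \<exists>\<psi>\<in>Sent \<tau>.
      \<forall>M. is_struc \<tau> M \<longrightarrow> ((\<forall>s. isat \<phi> M s) \<longleftrightarrow> sat M \<psi>))"

definition logic_le_inf ::
  "('n vocab \<Rightarrow> 'x set) \<Rightarrow> (('n, 'u) struc \<Rightarrow> 'x \<Rightarrow> bool) \<Rightarrow> ('n vocab \<Rightarrow> ('n, 'u) ifm set) \<Rightarrow> bool" where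
  "logic_le_inf Sent sat L2 \<longleftrightarrow> (\<forall>\<tau>. \<forall>\<psi>\<in>Sent \<tau>. \<exists>\<phi>\<in>L2 \<tau>.
      \<forall>M. is_struc \<tau> M \<longrightarrow> ((\<forall>s. isat \<phi> M s) \<longleftrightarrow> sat M \<psi>))"

end

theory Submission imports Defs begin
unbundle cardinal_syntax

lemma uncountable_K:
  assumes "singular_card K" shows "|UNIV::nat set| <o |K|"
proof (rule ccontr)
  assume "\<not> |UNIV::nat set| <o |K|"
  hence 1: "|K| \<le>o |UNIV::nat set|" by (simp add: not_ordLess_iff_ordLeq card_of_Well_order)
  have inf: "infinite K" using assms singular_card_def by blast
  have "natLeq \<le>o |K|" using inf infinite_iff_natLeq_ordLeq by blast
  moreover have "|K| \<le>o natLeq" using 1 card_of_nat ordLeq_ordIso_trans by blast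
  ultimately have "natLeq =o |K|" by (simp add: ordIso_iff_ordLeq)
  hence "regularCard |K|" using regularCard_ordIso natLeq_Cinfinite regularCard_natLeq by blast
  thus False using assms singular_card_def by blast
qed

lemma cof_set:
  assumes "singular_card K" shows "\<exists>C \<subseteq> K. |C| <o |K| \<and> cofinal C |K|"
proof -
  from assms obtain C where C: "C \<subseteq> Field |K|" "cofinal C |K|" "\<not> |C| =o |K|"
    unfolding singular_card_def regularCard_def by blast
  hence "C \<subseteq> K" by (simp add: Field_card_of)
  hence "|C| \<le>o |K|" by (rule card_of_mono1)
  hence "|C| <o |K|" using C(3) ordLeq_iff_ordLess_or_ordIso by blast
  thus ?thesis using C \<open>C \<subseteq> K\<close> by blast
qed

lemma underS_small: "c \<in> K \<Longrightarrow> |underS |K| c| <o |K|"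
  using card_of_underS[of "|K|" c] card_of_Card_order by (metis Field_card_of)

primrec fsyms :: "('n, 'v) ifm \<Rightarrow> 'n set" where
  "fsyms (RelA P xs) = {}"
| "fsyms (EqA x y) = {}"
| "fsyms (FunA F x ys) = {F}"
| "fsyms (Neg \<phi>) = fsyms \<phi>"
| "fsyms (Conj I f) = (\<Union>i\<in>I. fsyms (f i))"
| "fsyms (Exi V \<phi>) = fsyms \<phi>"

lemma fsyms_bound:
  fixes B :: "'b set"
  assumes "infinite B" "|A| \<le>o |B|"
  shows "iwf \<tau> (\<lambda>I. card_le I A) QB \<chi> \<Longrightarrow> |fsyms \<chi>| \<le>o |B|"
proof (induction \<chi>)
  case (FunA F x ys)
  then show ?case using assms(1) by (simp add: infinite_imp_nonempty card_of_singl_ordLeq)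
next
  case (Conj I f)
  hence "|I| \<le>o |B|" using assms(2) ordLeq_transitive unfolding card_le_def by auto
  moreover have "\<forall>i\<in>I. |fsyms (f i)| \<le>o |B|" using Conj by auto
  ultimately show ?case using card_of_UNION_ordLeq_infinite[OF assms(1)] by simp
qed (auto simp: card_of_empty)

lemma isat_inv:
  "dom M = dom N \<Longrightarrow> rel M = rel N \<Longrightarrow> (\<forall>F\<in>fsyms \<chi>. fn M F = fn N F) \<Longrightarrow> isat \<chi> M s = isat \<chi> N s"
proof (induction \<chi> arbitrary: s)
  case (Conj I f) then show ?case by simp
qed auto

definition neqf :: "'u \<Rightarrow> 'u \<Rightarrow> ('u,'u) ifm" where
  "neqf a b = Exi {a} (Conj {a,b} (\<lambda>i. if i = a then FunA a a [] else Neg (FunA b a [])))"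

lemma isat_neqf:
  assumes "a \<noteq> b" "struc.dom M = UNIV"
  shows "isat (neqf a b) M s \<longleftrightarrow> fn M a 0 [] \<noteq> fn M b 0 []"
proof
  assume "isat (neqf a b) M s"
  then obtain s' where "s' a = fn M a 0 []" "s' a \<noteq> fn M b 0 []"
    using assms(1) by (auto simp: neqf_def)
  thus "fn M a 0 [] \<noteq> fn M b 0 []" by simp
next
  assume h: "fn M a 0 [] \<noteq> fn M b 0 []"
  show "isat (neqf a b) M s" unfolding neqf_def
    using assms h by (auto intro!: exI[of _ "s(a := fn M a 0 [])"])
qed

lemma iwf_neqf:
  assumes "a \<in> U" "b \<in> U" "Fun a 0 \<in> \<tau>" "Fun b 0 \<in> \<tau>"
  shows "iwf \<tau> (\<lambda>I. card_le I U) finite (neqf a b)" "freev (neqf a b) = {}"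
  using assms by (auto simp: neqf_def card_le_def intro!: card_of_mono1)

lemma pick_c:
  assumes "Well_order r" "(a0,b0)\<in>r" "a0\<noteq>b0" "(a1,b1)\<in>r" "a1\<noteq>b1"
  shows "\<exists>c\<in>{b0,b1}. a0 \<in> underS r c \<and> a1 \<in> underS r c"
proof -
  have tr: "trans r" and an: "antisym r" and tot: "total_on (Field r) r" and rf: "refl_on (Field r) r"
    using assms(1) unfolding well_order_on_def linear_order_on_def partial_order_on_def preorder_on_def by auto
  have f: "b0 \<in> Field r" "b1 \<in> Field r" using assms by (auto intro: FieldI2)
  have "(b0,b1) \<in> r \<or> (b1,b0) \<in> r" using tot rf f unfolding total_on_def refl_on_def by (cases "b0 = b1") auto
  thus ?thesis
  proof
    assume h: "(b0,b1) \<in> r"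
    have "(a0,b1) \<in> r" using tr h assms(2) by (meson transD)
    moreover have "a0 \<noteq> b1" using h assms(2,3) an by (metis antisymD)
    ultimately show ?thesis using assms(4,5) by (auto simp: underS_def)
  next
    assume h: "(b1,b0) \<in> r"
    have "(a1,b0) \<in> r" using tr h assms(4) by (meson transD)
    moreover have "a1 \<noteq> b0" using h assms(4,5) an by (metis antisymD)
    ultimately show ?thesis using assms(2,3) by (auto simp: underS_def)
  qed
qed

theorem mainTheorem18:
  fixes K :: "'u set"
  assumes "singular_card K" and "strong_limit_card K"
  shows "\<not> (\<exists>(Sent :: 'u vocab \<Rightarrow> 'x set) (sat :: ('u, 'u) struc \<Rightarrow> 'x \<Rightarrow> bool).
            is_logic Sent sat
            \<and> inf_le_logic (Lminus1 K) Sent sat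
            \<and> logic_le_inf Sent sat (Lzero K)
            \<and> full_substitution Sent sat)"
proof
  assume "\<exists>(Sent :: 'u vocab \<Rightarrow> 'x set) (sat :: ('u, 'u) struc \<Rightarrow> 'x \<Rightarrow> bool).
            is_logic Sent sat
            \<and> inf_le_logic (Lminus1 K) Sent sat
            \<and> logic_le_inf Sent sat (Lzero K)
            \<and> full_substitution Sent sat"
  then obtain Sent :: "'u vocab \<Rightarrow> 'x set" and sat :: "('u, 'u) struc \<Rightarrow> 'x \<Rightarrow> bool" where
    L1: "inf_le_logic (Lminus1 K) Sent sat" and L2: "logic_le_inf Sent sat (Lzero K)"
    and FS: "full_substitution Sent sat" by blast
  have infK: "infinite K" using assms(1) singular_card_def by blast
  obtain C where C: "C \<subseteq> K" "(card_of C) <o (card_of K)" "cofinal C (card_of K)" using cof_set[OF assms(1)] by blast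
  define U where "U c = underS (card_of K) c" for c
  have UK: "U c \<subseteq> K" for c 
  proof -
    have "U c \<subseteq> Field (card_of K)" by (auto simp: U_def underS_def intro: FieldI1)
    thus ?thesis by (simp add: Field_card_of)
  qed
  define \<tau>1 :: "'u vocab" where "\<tau>1 = {Fun a 0 | a. a \<in> K}"
  define \<tau>2 :: "'u vocab" where "\<tau>2 = {Rel c 0 | c. c \<in> C}"
  define phi where "phi c = Conj (U c) (\<lambda>a. Conj (U c - {a}) (\<lambda>b. neqf a b))" for c
  define psi2 :: "('u,'u) ifm" where "psi2 = Conj C (\<lambda>c. RelA c [])"
  have phiL: "phi c \<in> Lminus1 K \<tau>1" if "c \<in> C" for c
  proof -
    have cl: "card_lt (U c) K" using underS_small[of c K] that C(1) unfolding U_def card_lt_def by blast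
    have nq: "iwf \<tau>1 (\<lambda>I. card_le I (U c)) finite (neqf a b) \<and> freev (neqf a b) = {}"
      if "a \<in> U c" "b \<in> U c" for a b
    proof -
      have "Fun a 0 \<in> \<tau>1" "Fun b 0 \<in> \<tau>1" using that UK[of c] by (auto simp: \<tau>1_def)
      thus ?thesis using iwf_neqf[OF that] by blast
    qed
    have "Lfin_sent (U c) \<tau>1 (phi c)"
      unfolding Lfin_sent_def phi_def using nq
      by (auto simp: card_le_def intro!: card_of_mono1)
    thus ?thesis using cl unfolding Lminus1_def by blast
  qed
  have psi2L: "psi2 \<in> Lminus1 K \<tau>2"
  proof -
    have "card_lt C K" using C(2) card_lt_def by blast
    moreover have "Lfin_sent C \<tau>2 psi2"
      unfolding Lfin_sent_def psi2_def by (auto simp: card_le_def \<tau>2_def intro!: card_of_mono1)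
    ultimately show ?thesis unfolding Lminus1_def by blast
  qed
  have "\<forall>c\<in>C. \<exists>\<psi>\<in>Sent \<tau>1. \<forall>M. is_struc \<tau>1 M \<longrightarrow> ((\<forall>s. isat (phi c) M s) \<longleftrightarrow> sat M \<psi>)"
    using L1 phiL unfolding inf_le_logic_def by blast
  then obtain th where th: "\<And>c. c \<in> C \<Longrightarrow> th c \<in> Sent \<tau>1"
    "\<And>c M. c \<in> C \<Longrightarrow> is_struc \<tau>1 M \<Longrightarrow> (\<forall>s. isat (phi c) M s) \<longleftrightarrow> sat M (th c)"
    by metis
  obtain psi2' where psi2': "psi2' \<in> Sent \<tau>2"
    "\<And>M. is_struc \<tau>2 M \<Longrightarrow> (\<forall>s. isat psi2 M s) \<longleftrightarrow> sat M psi2'"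
    using L1 psi2L unfolding inf_le_logic_def by blast
  define \<theta> :: "'u sym \<Rightarrow> 'u list \<times> 'x" where "\<theta> \<sigma> = (case \<sigma> of Rel c n \<Rightarrow> ([], th c) | Fun c n \<Rightarrow> ([], undefined))" for \<sigma>
  have SA: "subst_assignment Sent \<tau>1 \<tau>2 \<theta>"
    unfolding subst_assignment_def \<theta>_def \<tau>2_def const_vocab_def using th(1) by auto
  obtain \<psi>1 where \<psi>1: "\<psi>1 \<in> Sent \<tau>1" "\<And>M. is_struc \<tau>1 M \<and> subst_defined sat \<tau>2 \<theta> M
            \<Longrightarrow> (sat M \<psi>1 \<longleftrightarrow> sat (subst_struc sat \<tau>2 \<theta> M) psi2')"
    using FS SA psi2'(1) unfolding full_substitution_def by blast
  obtain \<chi> where \<chi>: "\<chi> \<in> Lzero K \<tau>1" "\<And>M. is_struc \<tau>1 M \<Longrightarrow> (\<forall>s. isat \<chi> M s) \<longleftrightarrow> sat M \<psi>1"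
    using L2 \<psi>1(1) unfolding logic_le_inf_def by blast
  have key: "(\<forall>s. isat \<chi> M s) \<longleftrightarrow> (\<forall>c\<in>C. \<forall>s. isat (phi c) M s)" if M: "is_struc \<tau>1 M" for M
  proof -
    have sd: "subst_defined sat \<tau>2 \<theta> M" unfolding subst_defined_def \<tau>2_def by auto
    have st: "is_struc \<tau>2 (subst_struc sat \<tau>2 \<theta> M)"
      using M unfolding is_struc_def subst_struc_def \<tau>2_def by (auto simp: tuples_def)
    have ec: "expand_consts M [] [] = M" unfolding expand_consts_def by simp
    have "(\<forall>s. isat psi2 (subst_struc sat \<tau>2 \<theta> M) s) \<longleftrightarrow> (\<forall>c\<in>C. sat M (th c))"
      unfolding psi2_def subst_struc_def \<tau>2_def \<theta>_def holds_at_def using ec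
      by (auto simp: tuples_def)
    thus ?thesis using \<chi>(2)[OF M] \<psi>1(2)[OF conjI[OF M sd]] psi2'(2)[OF st] th(2)[OF _ M] by auto
  qed
  obtain A :: "'u set" where A: "card_lt A K" "Linf_sent A \<tau>1 \<chi>"
    using \<chi>(1) unfolding Lzero_def by blast
  define B where "B = A <+> (UNIV :: nat set)"
  have Binf: "infinite B" unfolding B_def by simp
  have "(card_of (fsyms \<chi>)) \<le>o (card_of B)"
    using fsyms_bound[OF Binf, of A] card_of_Plus1[of A "UNIV :: nat set"] A(2) unfolding Linf_sent_def B_def by blast
  moreover have "(card_of B) <o (card_of K)" unfolding B_def
    using card_of_Plus_ordLess_infinite[OF infK] A(1) uncountable_K[OF assms(1)] card_lt_def by blast
  ultimately have fsK: "(card_of (fsyms \<chi>)) <o (card_of K)" using ordLeq_ordLess_trans by blast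
  obtain a0 where a0: "a0 \<in> K" "a0 \<notin> fsyms \<chi>"
  proof -
    have "\<not> K \<subseteq> fsyms \<chi>"
    proof
      assume "K \<subseteq> fsyms \<chi>"
      hence "(card_of K) \<le>o (card_of (fsyms \<chi>))" by (rule card_of_mono1)
      thus False using fsK not_ordLess_ordLeq by blast
    qed
    thus ?thesis using that by blast
  qed
  have "infinite (K - {a0})" using infK by simp
  then obtain a1 where a1: "a1 \<in> K" "a1 \<noteq> a0" using infinite_imp_nonempty by blast
  obtain b0 where b0: "b0 \<in> C" "a0 \<noteq> b0" "(a0,b0) \<in> card_of K"
    using C(3) a0(1) unfolding cofinal_def Field_card_of by blast
  obtain b1 where b1: "b1 \<in> C" "a1 \<noteq> b1" "(a1,b1) \<in> card_of K"
    using C(3) a1(1) unfolding cofinal_def Field_card_of by blast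
  obtain c where c: "c \<in> C" "a0 \<in> U c" "a1 \<in> U c"
    using pick_c[OF card_of_Well_order b0(3) b0(2) b1(3) b1(2)] b0(1) b1(1) unfolding U_def by blast
  define M0 :: "('u,'u) struc" where "M0 = \<lparr>dom = UNIV, rel = (\<lambda>_ _. {}),
     fn = (\<lambda>s n xs. if s \<in> K \<and> n = 0 \<and> xs = [] then s else undefined)\<rparr>"
  define N :: "('u,'u) struc" where "N = \<lparr>dom = UNIV, rel = (\<lambda>_ _. {}),
     fn = (\<lambda>s n xs. if s \<in> K \<and> n = 0 \<and> xs = [] then (if s = a0 then a1 else s) else undefined)\<rparr>"
  have sM0: "is_struc \<tau>1 M0" unfolding is_struc_def M0_def \<tau>1_def by (auto simp: tuples_def)
  have sN: "is_struc \<tau>1 N" unfolding is_struc_def N_def \<tau>1_def using a1 by (auto simp: tuples_def)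
  have phiM: "(\<forall>s. isat (phi c) M s) \<longleftrightarrow> (\<forall>a\<in>U c. \<forall>b\<in>U c - {a}. fn M a 0 [] \<noteq> fn M b 0 [])"
    if "struc.dom M = UNIV" for M c
  proof -
    have e: "isat (neqf a b) M s \<longleftrightarrow> fn M a 0 [] \<noteq> fn M b 0 []" if "b \<in> U c - {a}" for a b s
      using isat_neqf[of a b M s] that \<open>struc.dom M = UNIV\<close> by auto
    have "(\<forall>s. isat (phi c) M s) \<longleftrightarrow> (\<forall>s. \<forall>a\<in>U c. \<forall>b\<in>U c - {a}. isat (neqf a b) M s)"
      unfolding phi_def by simp
    also have "\<dots> \<longleftrightarrow> (\<forall>a\<in>U c. \<forall>b\<in>U c - {a}. fn M a 0 [] \<noteq> fn M b 0 [])"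
      using e by blast
    finally show ?thesis .
  qed
  have "\<forall>s. isat (phi c) M0 s" for c
  proof -
    have dm: "struc.dom M0 = UNIV" by (simp add: M0_def)
    have "\<forall>a\<in>U c. \<forall>b\<in>U c - {a}. fn M0 a 0 [] \<noteq> fn M0 b 0 []" using UK[of c] by (auto simp: M0_def)
    thus ?thesis using phiM[OF dm] by blast
  qed
  hence "\<forall>s. isat \<chi> M0 s" using key[OF sM0] by blast
  moreover have "isat \<chi> M0 s = isat \<chi> N s" for s
    by (rule isat_inv) (use a0 in \<open>auto simp: M0_def N_def\<close>)
  ultimately have "\<forall>s. isat \<chi> N s" by simp
  hence "\<forall>s. isat (phi c) N s" using key[OF sN] c(1) by blast
  moreover have dN: "struc.dom N = UNIV" by (simp add: N_def)
  ultimately have "\<forall>a\<in>U c. \<forall>b\<in>U c - {a}. fn N a 0 [] \<noteq> fn N b 0 []" using phiM[OF dN] by blast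
  hence "fn N a0 0 [] \<noteq> fn N a1 0 []" using c a1 by blast
  thus False using a0 a1 by (simp add: N_def)
qed

end
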